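(* Let $k,\ell,n$ be integers with $2\le\ell<k/2$, $n\ge1$, and let $G_1$, $U_i$, $H_1^1$, $H_1^2$, $H_2$, $tr_1$ and $\min$ be as in the context. Let $s\ge1$ and let $P=(e,e_1,\dots,e_s,e')$ be an $(\ell,k)$-path (edges listed in order) all of whose edges lie in $H_1^1\cup H_1^2\cup H_2$, such that the set of edges of $P$ lying in $H_1^1$ is exactly $\{e,e'\}$. Then: (a) every edge of $P$ lying in $H_1^2$ belongs to $\{e_1,e_s\}$; (b) if both $e_1$ and $e_s$ lie in $H_1^2$ and $e_1\neq e_s$, then $s=2$; (c) for every $i=1,\dots,s$, $\min(e_i)\in tr_1(e)\cap tr_1(e')$.
   Context: Let $G_1$ be a graph on vertex set $[n]=\{1,\dots,n\}$. Let $\{A_i,B_i: i=1,\dots,2n\}$ be $4n$ pairwise disjoint finite sets with $|A_i|=2\lfloor k/2\rfloor+\ell$ for $1\le i\le n$ and $|A_i|=2k-2\ell-3$ for $n+1\le i\le 2n$; put $U_i=A_i\cup B_i$ and $V=\bigcup_{i=1}^{2n}U_i$. For $S\subseteq V$ let $tr(S)=\{i:S\cap U_i\ne\emptyset\}$, $tr_1(S)=tr(S)\cap[n]$, $\min(S)=\min tr(S)$. Define $H_1^1$ as the set of $k$-subsets $e\subseteq V$ such that for some edge $\{i,j\}$ of $G_1$, $tr_1(e)=\{i,j\}$, $|A_i\cap e|\ge\lfloor k/2\rfloor$ and $|A_j\cap e|\ge\lfloor k/2\rfloor$. Define $H_1^2$ as the set of $k$-subsets $e\subseteq V$ such that for some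 $i\in[n]$, $tr(e)=\{i,n+i\}$, $|A_i\cap e|=\ell+1$ and $|A_{n+i}\cap e|=k-\ell-1$. Let $H_2$ be the set of $k$-subsets $e\subseteq V$ with $|e\cap U_{\min(e)}|\ge k-\ell+1$. An $(\ell,k)$-path is a $k$-graph with distinct vertices $v_1,\dots,v_s$, $s\equiv\ell\pmod{k-\ell}$, $s\ge k$, and edges $\{v_{i(k-\ell)+1},\dots,v_{i(k-\ell)+k}\}$, $i=0,\dots,(s-k)/(k-\ell)$. *)

theory Defs
  imports Main
begin

definition blockU :: "(nat \<Rightarrow> 'a set) \<Rightarrow> (nat \<Rightarrow> 'a set) \<Rightarrow> nat \<Rightarrow> 'a set" where
  "blockU A B i = A i \<union> B i"

definition groundV :: "nat \<Rightarrow> (nat \<Rightarrow> 'a set) \<Rightarrow> (nat \<Rightarrow> 'a set) \<Rightarrow> 'a set" where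
  "groundV n A B = (\<Union>i\<in>{1..2*n}. blockU A B i)"

definition tr :: "nat \<Rightarrow> (nat \<Rightarrow> 'a set) \<Rightarrow> (nat \<Rightarrow> 'a set) \<Rightarrow> 'a set \<Rightarrow> nat set" where
  "tr n A B S = {i \<in> {1..2*n}. S \<inter> blockU A B i \<noteq> {}}"

definition tr1 :: "nat \<Rightarrow> (nat \<Rightarrow> 'a set) \<Rightarrow> (nat \<Rightarrow> 'a set) \<Rightarrow> 'a set \<Rightarrow> nat set" where
  "tr1 n A B S = tr n A B S \<inter> {1..n}"

definition minS :: "nat \<Rightarrow> (nat \<Rightarrow> 'a set) \<Rightarrow> (nat \<Rightarrow> 'a set) \<Rightarrow> 'a set \<Rightarrow> nat" where
  "minS n A B S = Min (tr n A B S)"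

text \<open>The graph G_1 on [n] is given as a set of 2-element subsets of {1..n}.\<close>
definition H11 :: "nat \<Rightarrow> nat \<Rightarrow> nat set set \<Rightarrow> (nat \<Rightarrow> 'a set) \<Rightarrow> (nat \<Rightarrow> 'a set) \<Rightarrow> 'a set set" where
  "H11 k n G A B = {e. e \<subseteq> groundV n A B \<and> finite e \<and> card e = k \<and>
      (\<exists>i j. {i, j} \<in> G \<and> tr1 n A B e = {i, j} \<and>
             card (A i \<inter> e) \<ge> k div 2 \<and> card (A j \<inter> e) \<ge> k div 2)}"

definition H12 :: "nat \<Rightarrow> nat \<Rightarrow> nat \<Rightarrow> (nat \<Rightarrow> 'a set) \<Rightarrow> (nat \<Rightarrow> 'a set) \<Rightarrow> 'a set set" where
  "H12 l k n A B = {e. e \<subseteq> groundV n A B \<and> finite e \<and> card e = k \<and>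
      (\<exists>i\<in>{1..n}. tr n A B e = {i, n + i} \<and>
             card (A i \<inter> e) = l + 1 \<and> card (A (n + i) \<inter> e) = k - l - 1)}"

definition H2 :: "nat \<Rightarrow> nat \<Rightarrow> nat \<Rightarrow> (nat \<Rightarrow> 'a set) \<Rightarrow> (nat \<Rightarrow> 'a set) \<Rightarrow> 'a set set" where
  "H2 l k n A B = {e. e \<subseteq> groundV n A B \<and> finite e \<and> card e = k \<and>
      card (e \<inter> blockU A B (minS n A B e)) \<ge> k - l + 1}"

text \<open>An (l,k)-path given by its vertex sequence vs = v_1 ... v_s (distinct vertices);
  its j-th edge (j = 0,1,...) is {v_{j(k-l)+1}, ..., v_{j(k-l)+k}}.\<close>
definition is_lk_path :: "nat \<Rightarrow> nat \<Rightarrow> 'a list \<Rightarrow> bool" where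
  "is_lk_path l k vs \<longleftrightarrow> distinct vs \<and> length vs \<ge> k \<and>
      length vs mod (k - l) = l mod (k - l)"

definition path_edge :: "nat \<Rightarrow> nat \<Rightarrow> 'a list \<Rightarrow> nat \<Rightarrow> 'a set" where
  "path_edge l k vs j = set (take k (drop (j * (k - l)) vs))"

definition num_edges :: "nat \<Rightarrow> nat \<Rightarrow> 'a list \<Rightarrow> nat" where
  "num_edges l k vs = (length vs - k) div (k - l) + 1"

end

theory Submission
  imports Defs
begin


lemma set_take_drop_nth:
  assumes "m + k \<le> length xs"
  shows "set (take k (drop m xs)) = (\<lambda>p. xs ! p) ` {m..<m+k}"
proof -
  have "set (take k (drop m xs)) = {take k (drop m xs) ! i | i. i < length (take k (drop m xs))}"
    by (simp add: set_conv_nth)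
  also have "\<dots> = {xs ! (m + i) | i. i < k}"
  proof -
    have l: "length (take k (drop m xs)) = k" using assms by simp
    have n: "\<And>i. i < k \<Longrightarrow> take k (drop m xs) ! i = xs ! (m+i)" using assms by simp
    show ?thesis using l n by (metis (lifting))
  qed
  also have "\<dots> = (\<lambda>p. xs ! p) ` {m..<m+k}"
    apply (auto simp: image_def)
    by (metis add.commute le_Suc_ex nat_add_left_cancel_less)
  finally show ?thesis .
qed

lemma path_facts:
  assumes path: "is_lk_path l k vs" and ne: "num_edges l k vs = s + 2" and kl: "2 * l < k"
  shows "\<forall>j\<le>s. card (path_edge l k vs j \<inter> path_edge l k vs (Suc j)) = l"
    and "\<forall>p q. p + 2 \<le> q \<longrightarrow> q \<le> s + 1 \<longrightarrow> path_edge l k vs p \<inter> path_edge l k vs q = {}"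
proof -
  define d where "d = k - l"
  define L where "L = length vs"
  have dl: "l < d" "k = l + d" using kl by (auto simp: d_def)
  have Lk: "L \<ge> k" and Lm: "L mod d = l mod d" and dist: "distinct vs"
    using path by (auto simp: is_lk_path_def L_def d_def)
  have lm: "l mod d = l" using dl by simp
  have q: "(L - k) div d = s + 1" using ne by (simp add: num_edges_def L_def d_def)
  have "L = d * (L div d) + l" using Lm lm by (metis mod_mult_div_eq add.commute)
  hence "L - k = d * (L div d - 1)" using Lk dl by (simp add: diff_mult_distrib2)
  hence Leq: "L - k = d * (s + 1)" using q dl by (metis mult.commute nonzero_mult_div_cancel_right not_less_zero)
  have pe: "path_edge l k vs j = (\<lambda>p. vs ! p) ` {j*d..<j*d+k}" if "j \<le> s + 1" for j
  proof -
    have "j * d \<le> (s+1) * d" using that by (rule mult_le_mono1)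
    hence "j*d + k \<le> L" using Leq Lk by (simp add: mult.commute)
    thus ?thesis unfolding path_edge_def d_def[symmetric] L_def by (rule set_take_drop_nth)
  qed
  have inj: "inj_on (\<lambda>p. vs ! p) {..<L}" using dist unfolding L_def distinct_conv_nth inj_on_def by blast
  have sub: "{j*d..<j*d+k} \<subseteq> {..<L}" if "j \<le> s + 1" for j
  proof -
    have "j * d \<le> (s+1) * d" using that by (rule mult_le_mono1)
    hence "j*d + k \<le> L" using Leq Lk by (simp add: mult.commute)
    thus ?thesis by auto
  qed
  show "\<forall>j\<le>s. card (path_edge l k vs j \<inter> path_edge l k vs (Suc j)) = l"
  proof (intro allI impI)
    fix j assume j: "j \<le> s"
    have "path_edge l k vs j \<inter> path_edge l k vs (Suc j)
          = (\<lambda>p. vs ! p) ` ({j*d..<j*d+k} \<inter> {Suc j*d..<Suc j*d+k})"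
      using pe[of j] pe[of "Suc j"] j inj_on_image_Int[OF inj sub[of j] sub[of "Suc j"]] by simp
    also have "{j*d..<j*d+k} \<inter> {Suc j*d..<Suc j*d+k} = {j*d+d..<j*d+k}" using dl by auto
    finally have eq: "path_edge l k vs j \<inter> path_edge l k vs (Suc j) = (\<lambda>p. vs ! p) ` {j*d+d..<j*d+k}" .
    have "{j*d+d..<j*d+k} \<subseteq> {..<L}" using sub[of j] j by (auto simp: subset_iff)
    hence "card ((\<lambda>p. vs ! p) ` {j*d+d..<j*d+k}) = card {j*d+d..<j*d+k}"
      using inj by (meson card_image inj_on_subset)
    thus "card (path_edge l k vs j \<inter> path_edge l k vs (Suc j)) = l" using eq dl by simp
  qed
  show "\<forall>p q. p + 2 \<le> q \<longrightarrow> q \<le> s + 1 \<longrightarrow> path_edge l k vs p \<inter> path_edge l k vs q = {}"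
  proof (intro allI impI)
    fix p q assume pq: "p + 2 \<le> q" "q \<le> s + 1"
    have "(p + 2) * d \<le> q * d" using pq(1) by (rule mult_le_mono1)
    hence "p*d + k \<le> q*d" using dl by (simp add: algebra_simps)
    hence "{p*d..<p*d+k} \<inter> {q*d..<q*d+k} = {}" by auto
    thus "path_edge l k vs p \<inter> path_edge l k vs q = {}"
      using pe[of p] pe[of q] pq inj_on_image_Int[OF inj sub[of p] sub[of q]] by simp
  qed
qed


locale blk =
  fixes n :: nat and A B :: "nat \<Rightarrow> 'a set"
  assumes n1: "n \<ge> 1"
    and disjAA: "\<forall>i\<in>{1..2*n}. \<forall>j\<in>{1..2*n}. i \<noteq> j \<longrightarrow> A i \<inter> A j = {}"
    and disjBB: "\<forall>i\<in>{1..2*n}. \<forall>j\<in>{1..2*n}. i \<noteq> j \<longrightarrow> B i \<inter> B j = {}"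
    and disjAB: "\<forall>i\<in>{1..2*n}. \<forall>j\<in>{1..2*n}. A i \<inter> B j = {}"
begin

lemma U_same: "x \<in> blockU A B i \<Longrightarrow> x \<in> blockU A B j \<Longrightarrow> i \<in> {1..2*n} \<Longrightarrow> j \<in> {1..2*n} \<Longrightarrow> i = j"
  using disjAA disjBB disjAB unfolding blockU_def by blast

lemma tr_sub: "tr n A B e \<subseteq> {1..2*n}" by (auto simp: tr_def)

lemma tr_mem: "x \<in> e \<Longrightarrow> x \<in> blockU A B t \<Longrightarrow> t \<in> {1..2*n} \<Longrightarrow> t \<in> tr n A B e"
  by (auto simp: tr_def)

lemma in_ground: "e \<subseteq> groundV n A B \<Longrightarrow> x \<in> e \<Longrightarrow> \<exists>t\<in>{1..2*n}. x \<in> blockU A B t"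
  by (auto simp: groundV_def)

lemma minS_le: "t \<in> tr n A B e \<Longrightarrow> minS n A B e \<le> t"
  unfolding minS_def using tr_sub by (meson Min_le finite_atLeastAtMost finite_subset)

lemma minS_in: "e \<subseteq> groundV n A B \<Longrightarrow> e \<noteq> {} \<Longrightarrow> minS n A B e \<in> tr n A B e"
proof -
  assume a: "e \<subseteq> groundV n A B" "e \<noteq> {}"
  then obtain x where "x \<in> e" by blast
  then obtain t where "t\<in>{1..2*n}" "x \<in> blockU A B t" using in_ground a by blast
  hence "tr n A B e \<noteq> {}" using tr_mem \<open>x \<in> e\<close> by blast
  thus ?thesis unfolding minS_def using tr_sub by (meson Min_in finite_atLeastAtMost finite_subset)
qed

lemma H11_facts:
  assumes e: "e \<in> H11 k n G A B" and G: "\<forall>x\<in>G. x \<subseteq> {1..n} \<and> card x = 2"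
  shows "\<exists>a b. a \<noteq> b \<and> a \<in> {1..n} \<and> b \<in> {1..n} \<and> tr1 n A B e = {a, b}
     \<and> card (A a \<inter> e) \<ge> k div 2 \<and> card (A b \<inter> e) \<ge> k div 2 \<and> card (e - (A a \<union> A b)) \<le> 1"
proof -
  obtain a b where ab: "{a,b} \<in> G" "tr1 n A B e = {a, b}" "card (A a \<inter> e) \<ge> k div 2"
     "card (A b \<inter> e) \<ge> k div 2" and fe: "finite e" "card e = k"
    using e by (auto simp: H11_def)
  have "{a,b} \<subseteq> {1..n}" "card {a,b} = 2" using G ab(1) by auto
  hence abn: "a \<noteq> b" "a \<in> {1..n}" "b \<in> {1..n}" by auto
  have "A a \<inter> A b = {}" using disjAA abn by auto
  hence "card (e \<inter> (A a \<union> A b)) = card (A a \<inter> e) + card (A b \<inter> e)"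
    using fe by (metis Int_Un_distrib Int_commute card_Un_disjoint finite_Int inf_bot_right inf_left_commute)
  moreover have "card (e - (A a \<union> A b)) = card e - card (e \<inter> (A a \<union> A b))"
    using fe by (simp add: card_Diff_subset_Int Diff_Int2 card_Diff_subset)
  ultimately have "card (e - (A a \<union> A b)) \<le> 1" using ab fe by linarith
  thus ?thesis using ab abn by blast
qed

lemma H12_facts:
  assumes e: "e \<in> H12 l k n A B" and lk: "l < k"
  shows "\<exists>i\<in>{1..n}. minS n A B e = i \<and> e \<subseteq> A i \<union> A (n + i) \<and> card (A i \<inter> e) = l + 1
      \<and> card (A (n + i) \<inter> e) = k - l - 1"
proof -
  obtain i where i: "i \<in> {1..n}" "tr n A B e = {i, n+i}" "card (A i \<inter> e) = l + 1"
    "card (A (n+i) \<inter> e) = k - l - 1" and fe: "finite e" "card e = k" "e \<subseteq> groundV n A B"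
    using e by (auto simp: H12_def)
  have dis: "A i \<inter> A (n+i) = {}" using disjAA i(1) by auto
  have "card (e \<inter> (A i \<union> A (n+i))) = card (A i \<inter> e) + card (A (n+i) \<inter> e)"
    using fe dis by (metis Int_Un_distrib Int_commute card_Un_disjoint finite_Int inf_bot_right inf_left_commute)
  hence "card (e \<inter> (A i \<union> A (n+i))) = card e" using i fe lk by simp
  hence "e \<inter> (A i \<union> A (n+i)) = e" using fe by (meson card_subset_eq inf_le1)
  hence sub: "e \<subseteq> A i \<union> A (n+i)" by blast
  have "minS n A B e = i" unfolding minS_def using i by simp
  thus ?thesis using i sub by blast
qed

lemma H2_meet:
  assumes e: "e \<in> H2 l k n A B" and S: "S \<subseteq> e" "card S \<ge> l" and l1: "l \<ge> 1"
  shows "S \<inter> blockU A B (minS n A B e) \<noteq> {}"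
proof
  assume "S \<inter> blockU A B (minS n A B e) = {}"
  hence "S \<subseteq> e - blockU A B (minS n A B e)" using S by blast
  moreover have fe: "finite e" "card e = k" "card (e \<inter> blockU A B (minS n A B e)) \<ge> k - l + 1"
    using e by (auto simp: H2_def)
  moreover have "card (e - blockU A B (minS n A B e)) = card e - card (e \<inter> blockU A B (minS n A B e))"
    using fe by (simp add: card_Diff_subset_Int Diff_Int2 card_Diff_subset)
  ultimately have "card S \<le> card e - card (e \<inter> blockU A B (minS n A B e))"
    by (metis card_mono finite_Diff)
  thus False using S l1 fe by linarith
qed

lemma H2_minS: "e \<in> H2 l k n A B \<Longrightarrow> k > 0 \<Longrightarrow> minS n A B e \<in> tr n A B e"
  by (rule minS_in) (auto simp: H2_def)

lemma H2_range: "e \<in> H2 l k n A B \<Longrightarrow> 0 < k \<Longrightarrow> minS n A B e \<in> {1..2*n}"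
  using H2_minS tr_sub by blast

definition red :: "nat \<Rightarrow> nat" where "red m = (if m \<le> n then m else m - n)"

lemma red_i: "i \<in> {1..n} \<Longrightarrow> m = i \<or> m = n + i \<Longrightarrow> red m = i"
  by (auto simp: red_def)

lemma H12_U: "f \<subseteq> A i \<union> A (n + i) \<Longrightarrow> x \<in> f \<Longrightarrow> x \<in> blockU A B i \<or> x \<in> blockU A B (n+i)"
  by (auto simp: blockU_def)

lemma H12_H2:
  assumes f: "f \<in> H12 l k n A B" and g: "g \<in> H2 l k n A B" and S: "S \<subseteq> f" "S \<subseteq> g" "card S = l"
    and l: "2 \<le> l" "l < k"
  shows "red (minS n A B f) = red (minS n A B g)"
proof -
  obtain i where i: "i\<in>{1..n}" "minS n A B f = i" "f \<subseteq> A i \<union> A (n + i)"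
    using H12_facts[OF f l(2)] by blast
  have mg: "minS n A B g \<in> {1..2*n}" using H2_range[OF g] l by simp
  obtain x where x: "x \<in> S" "x \<in> blockU A B (minS n A B g)" using H2_meet[OF g S(2)] S l by auto
  have "x \<in> blockU A B i \<or> x \<in> blockU A B (n+i)" using H12_U[OF i(3)] x S by auto
  hence "minS n A B g = i \<or> minS n A B g = n + i" using U_same x mg i(1) by fastforce
  thus ?thesis using red_i i by auto
qed

lemma trans_mid:
  assumes f: "f \<in> H12 l k n A B \<union> H2 l k n A B" and g: "g \<in> H12 l k n A B \<union> H2 l k n A B"
    and S: "S \<subseteq> f" "S \<subseteq> g" "card S = l" and l: "2 \<le> l" "l < k"
  shows "red (minS n A B f) = red (minS n A B g)"
proof (cases "f \<in> H12 l k n A B")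
  case f12: True
  show ?thesis
  proof (cases "g \<in> H12 l k n A B")
    case True
    obtain i where i: "i\<in>{1..n}" "minS n A B f = i" "f \<subseteq> A i \<union> A (n + i)"
      using H12_facts[OF f12 l(2)] by blast
    obtain j where j: "j\<in>{1..n}" "minS n A B g = j" "g \<subseteq> A j \<union> A (n + j)"
      using H12_facts[OF True l(2)] by blast
    obtain x where x: "x \<in> S" using S l by fastforce
    have "x \<in> blockU A B i \<or> x \<in> blockU A B (n+i)" using H12_U[OF i(3)] x S by auto
    moreover have "x \<in> blockU A B j \<or> x \<in> blockU A B (n+j)" using H12_U[OF j(3)] x S by auto
    moreover have r: "i \<in> {1..2*n}" "n+i \<in> {1..2*n}" "j \<in> {1..2*n}" "n+j \<in> {1..2*n}"
      using i(1) j(1) by auto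
    ultimately have "i = j \<or> i = n + j \<or> n + i = j \<or> n + i = n + j"
      using U_same[of x] by metis
    hence "i = j" using i(1) j(1) by auto
    thus ?thesis using i j by simp
  next
    case False
    thus ?thesis using H12_H2[OF f12 _ S l] g by auto
  qed
next
  case f2: False
  hence f2: "f \<in> H2 l k n A B" using f by auto
  show ?thesis
  proof (cases "g \<in> H12 l k n A B")
    case True
    thus ?thesis using H12_H2[OF True f2 S(2) S(1) S(3) l] by simp
  next
    case False
    hence g2: "g \<in> H2 l k n A B" using g by auto
    have mf: "minS n A B f \<in> {1..2*n}" using H2_range[OF f2] l by simp
    have mg: "minS n A B g \<in> {1..2*n}" using H2_range[OF g2] l by simp
    obtain x where x: "x \<in> S" "x \<in> blockU A B (minS n A B f)" using H2_meet[OF f2 S(1)] S l by auto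
    obtain y where y: "y \<in> S" "y \<in> blockU A B (minS n A B g)" using H2_meet[OF g2 S(2)] S l by auto
    have "minS n A B g \<le> minS n A B f" using minS_le tr_mem x mf S by blast
    moreover have "minS n A B f \<le> minS n A B g" using minS_le tr_mem y mg S by blast
    ultimately show ?thesis by simp
  qed
qed

lemma trans_end:
  assumes e: "e \<in> H11 k n G A B" and G: "\<forall>x\<in>G. x \<subseteq> {1..n} \<and> card x = 2"
    and g: "g \<in> H12 l k n A B \<union> H2 l k n A B"
    and S: "S \<subseteq> e" "S \<subseteq> g" "card S = l" and l: "2 \<le> l" "l < k"
  shows "minS n A B g \<in> tr1 n A B e"
proof -
  obtain a b where ab: "a \<noteq> b" "a \<in> {1..n}" "b \<in> {1..n}" "tr1 n A B e = {a, b}"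
     "card (e - (A a \<union> A b)) \<le> 1" using H11_facts[OF e G] by blast
  have fe: "finite e" using e by (auto simp: H11_def)
  have "S \<inter> (A a \<union> A b) \<noteq> {}"
  proof
    assume "S \<inter> (A a \<union> A b) = {}"
    hence "S \<subseteq> e - (A a \<union> A b)" using S by blast
    hence "card S \<le> 1" using ab(5) fe by (meson card_mono finite_Diff le_trans)
    thus False using S l by simp
  qed
  then obtain y c where y: "y \<in> S" "y \<in> A c" "c = a \<or> c = b" by blast
  have c: "c \<in> {1..n}" "c \<in> tr1 n A B e" using y ab by auto
  have yU: "y \<in> blockU A B c" using y by (simp add: blockU_def)
  show ?thesis
  proof (cases "g \<in> H12 l k n A B")
    case True
    obtain i where i: "i\<in>{1..n}" "minS n A B g = i" "g \<subseteq> A i \<union> A (n + i)"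
      using H12_facts[OF True l(2)] by blast
    have "y \<in> blockU A B i \<or> y \<in> blockU A B (n+i)" using H12_U[OF i(3)] y S by auto
    hence "c = i \<or> c = n + i" using U_same yU c(1) i(1) by fastforce
    hence "c = i" using c(1) i(1) by auto
    thus ?thesis using i c by simp
  next
    case False
    hence g2: "g \<in> H2 l k n A B" using g by auto
    have mg: "minS n A B g \<in> {1..2*n}" using H2_range[OF g2] l by simp
    obtain x where x: "x \<in> S" "x \<in> blockU A B (minS n A B g)" using H2_meet[OF g2 S(2)] S l by auto
    have "minS n A B g \<in> tr n A B e" using tr_mem x mg S by blast
    moreover have "c \<in> tr n A B g" using tr_mem[of y g c] yU y S c(1) by auto
    hence "minS n A B g \<le> n" using minS_le c(1) by (meson atLeastAtMost_iff le_trans)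
    ultimately show ?thesis using mg by (auto simp: tr1_def)
  qed
qed

lemma H2_H2_eq:
  assumes f2: "f \<in> H2 l k n A B" and g2: "g \<in> H2 l k n A B"
    and S: "S \<subseteq> f" "S \<subseteq> g" "card S = l" and l: "2 \<le> l" "l < k"
  shows "minS n A B f = minS n A B g"
proof -
    have mf: "minS n A B f \<in> {1..2*n}" using H2_range[OF f2] l by simp
    have mg: "minS n A B g \<in> {1..2*n}" using H2_range[OF g2] l by simp
    obtain x where x: "x \<in> S" "x \<in> blockU A B (minS n A B f)" using H2_meet[OF f2 S(1)] S l by auto
    obtain y where y: "y \<in> S" "y \<in> blockU A B (minS n A B g)" using H2_meet[OF g2 S(2)] S l by auto
    have "minS n A B g \<le> minS n A B f" using minS_le tr_mem x mf S by blast
    moreover have "minS n A B f \<le> minS n A B g" using minS_le tr_mem y mg S by blast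
    ultimately show ?thesis by simp
qed

lemma H11_H12:
  assumes e: "e \<in> H11 k n G A B" and G: "\<forall>x\<in>G. x \<subseteq> {1..n} \<and> card x = 2"
    and e2: "e \<in> H12 l k n A B"
  shows False
proof -
  obtain a b where ab: "a \<noteq> b" "tr1 n A B e = {a, b}" using H11_facts[OF e G] by blast
  obtain i where i: "i \<in> {1..n}" "tr n A B e = {i, n+i}" using e2 by (auto simp: H12_def)
  have "tr1 n A B e = {i}" using i by (auto simp: tr1_def)
  thus False using ab by (metis insertI1 insert_commute singletonD)
qed

lemma H_card: "e \<in> H11 k n G A B \<union> H12 l k n A B \<union> H2 l k n A B \<Longrightarrow> card e = k"
  by (auto simp: H11_def H12_def H2_def)

end


theorem proposition3p4:
  fixes k l n s :: nat and G :: "nat set set" and A B :: "nat \<Rightarrow> 'a set" and vs :: "'a list"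
  assumes kl: "2 \<le> l" "2 * l < k" and n1: "n \<ge> 1"
    and G: "\<forall>x\<in>G. x \<subseteq> {1..n} \<and> card x = 2"
    and finA: "\<forall>i\<in>{1..2*n}. finite (A i)" and finB: "\<forall>i\<in>{1..2*n}. finite (B i)"
    and disjAA: "\<forall>i\<in>{1..2*n}. \<forall>j\<in>{1..2*n}. i \<noteq> j \<longrightarrow> A i \<inter> A j = {}"
    and disjBB: "\<forall>i\<in>{1..2*n}. \<forall>j\<in>{1..2*n}. i \<noteq> j \<longrightarrow> B i \<inter> B j = {}"
    and disjAB: "\<forall>i\<in>{1..2*n}. \<forall>j\<in>{1..2*n}. A i \<inter> B j = {}"
    and cardA1: "\<forall>i\<in>{1..n}. card (A i) = 2 * (k div 2) + l"
    and cardA2: "\<forall>i\<in>{n+1..2*n}. card (A i) = 2 * k - 2 * l - 3"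
    and s1: "s \<ge> 1"
    and path: "is_lk_path l k vs" and nedges: "num_edges l k vs = s + 2"
    and inH: "\<forall>j\<le>s+1. path_edge l k vs j \<in> H11 k n G A B \<union> H12 l k n A B \<union> H2 l k n A B"
    and H11exact: "{path_edge l k vs j | j. j \<le> s + 1 \<and> path_edge l k vs j \<in> H11 k n G A B}
                   = {path_edge l k vs 0, path_edge l k vs (s + 1)}"
  shows "(\<forall>j\<le>s+1. path_edge l k vs j \<in> H12 l k n A B \<longrightarrow>
              path_edge l k vs j \<in> {path_edge l k vs 1, path_edge l k vs s})
       \<and> (path_edge l k vs 1 \<in> H12 l k n A B \<and> path_edge l k vs s \<in> H12 l k n A B \<and>
            path_edge l k vs 1 \<noteq> path_edge l k vs s \<longrightarrow> s = 2)
       \<and> (\<forall>i\<in>{1..s}. minS n A B (path_edge l k vs i)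
              \<in> tr1 n A B (path_edge l k vs 0) \<inter> tr1 n A B (path_edge l k vs (s + 1)))"
proof -
  interpret blk n A B using n1 disjAA disjBB disjAB by unfold_locales
  define E where "E = path_edge l k vs"
  have l2: "2 \<le> l" and lk: "l < k" using kl by auto
  have cons: "\<forall>j\<le>s. card (E j \<inter> E (Suc j)) = l"
    and far: "\<forall>p q. p + 2 \<le> q \<longrightarrow> q \<le> s + 1 \<longrightarrow> E p \<inter> E q = {}"
    using path_facts[OF path nedges kl(2)] unfolding E_def by auto
  have inH': "\<And>j. j \<le> s + 1 \<Longrightarrow> E j \<in> H11 k n G A B \<union> H12 l k n A B \<union> H2 l k n A B"
    using inH unfolding E_def by blast
  have cardE: "\<And>j. j \<le> s + 1 \<Longrightarrow> card (E j) = k" using inH' H_card by blast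
  have H11ex: "{E j | j. j \<le> s + 1 \<and> E j \<in> H11 k n G A B} = {E 0, E (s + 1)}"
    using H11exact unfolding E_def .
  have E0: "E 0 \<in> H11 k n G A B" and Es1: "E (s+1) \<in> H11 k n G A B"
    using H11ex by (smt (verit, best) insertI1 insert_commute mem_Collect_eq)+
  have neq: "E j \<noteq> E p" if "j \<le> s + 1" "p < j" for j p
  proof
    assume eq: "E j = E p"
    show False
    proof (cases "j = Suc p")
      case True
      have "card (E p \<inter> E (Suc p)) = l" using cons that True by auto
      thus False using eq True cardE[of j] that lk by simp
    next
      case False
      hence "E p \<inter> E j = {}" using far that by auto
      thus False using eq cardE[of j] that lk by simp
    qed
  qed
  have mid: "E j \<in> H12 l k n A B \<union> H2 l k n A B" if "1 \<le> j" "j \<le> s" for j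
  proof -
    have "E j \<notin> H11 k n G A B"
    proof
      assume "E j \<in> H11 k n G A B"
      hence "E j \<in> {E 0, E (s + 1)}" using H11ex that by auto
      moreover have "E j \<noteq> E 0" using neq[of j 0] that by auto
      moreover have "E j \<noteq> E (s+1)" using neq[of "s+1" j] that by auto
      ultimately show False by blast
    qed
    thus ?thesis using inH'[of j] that by auto
  qed
  have S01: "card (E 0 \<inter> E 1) = l" using cons by auto
  define c where "c = minS n A B (E 1)"
  have c_tr: "c \<in> tr1 n A B (E 0)"
    unfolding c_def using trans_end[OF E0 G mid[of 1] Int_lower1 Int_lower2 S01 l2 lk] s1 by auto
  have cn: "c \<in> {1..n}" using c_tr by (auto simp: tr1_def)
  have redc: "red c = c" using cn by (simp add: red_def)
  have chain: "1 \<le> j \<longrightarrow> j \<le> s \<longrightarrow> red (minS n A B (E j)) = c" for j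
  proof (induction j)
    case 0 then show ?case by simp
  next
    case (Suc j)
    show ?case
    proof (intro impI)
      assume a: "1 \<le> Suc j" "Suc j \<le> s"
      show "red (minS n A B (E (Suc j))) = c"
      proof (cases "j = 0")
        case True thus ?thesis using redc c_def by simp
      next
        case False
        have "red (minS n A B (E j)) = red (minS n A B (E (Suc j)))"
          using trans_mid[OF mid[of j] mid[of "Suc j"] Int_lower1 Int_lower2 _ l2 lk] cons a False by auto
        thus ?thesis using Suc False a by simp
      qed
    qed
  qed
  have range: "minS n A B (E j) \<in> {1..2*n}" if "1 \<le> j" "j \<le> s" for j
  proof (cases "E j \<in> H12 l k n A B")
    case True thus ?thesis using H12_facts[OF True lk] by auto
  next
    case False thus ?thesis using mid[OF that] H2_range lk by auto
  qed
  have cases_m: "minS n A B (E j) = c \<or> minS n A B (E j) = n + c" if "1 \<le> j" "j \<le> s" for j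
    using chain[of j] range[OF that] that cn by (auto simp: red_def split: if_splits)
  have H12idx: "minS n A B (E j) = c \<and> card (A c \<inter> E j) = l + 1 \<and> card (A (n + c) \<inter> E j) = k - l - 1"
    if hj: "1 \<le> j" "j \<le> s" "E j \<in> H12 l k n A B" for j
  proof -
    obtain i where i: "i\<in>{1..n}" "minS n A B (E j) = i" "card (A i \<inter> E j) = l + 1"
      "card (A (n + i) \<inter> E j) = k - l - 1" using H12_facts[OF hj(3) lk] by blast
    have "i = c" using cases_m[OF hj(1,2)] i cn by auto
    thus ?thesis using i by simp
  qed
  have Ss: "card (E s \<inter> E (s+1)) = l" using cons by auto
  have right: "minS n A B (E s) \<in> tr1 n A B (E (s+1))"
    using trans_end[OF Es1 G mid[of s] Int_lower2 Int_lower1 Ss l2 lk] s1 by auto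
  hence "minS n A B (E s) \<le> n" by (auto simp: tr1_def)
  hence "minS n A B (E s) = c" using chain[of s] s1 by (simp add: red_def)
  hence c_tr2: "c \<in> tr1 n A B (E (s+1))" using right by simp
  have finAc: "finite (A c)" "finite (A (n + c))" using finA cn by auto
  have cardAc: "card (A c) = 2 * (k div 2) + l" using cardA1 cn by auto
  have cardAnc: "card (A (n + c)) = 2 * k - 2 * l - 3" using cardA2 cn by auto
  have two12: False if "1 \<le> p" "p + 2 \<le> q" "q \<le> s" "E p \<in> H12 l k n A B" "E q \<in> H12 l k n A B" for p q
  proof -
    have d: "E p \<inter> E q = {}" using far that by auto
    have "card (A (n + c) \<inter> E p) + card (A (n + c) \<inter> E q) = card ((A (n + c) \<inter> E p) \<union> (A (n + c) \<inter> E q))"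
      using d finAc by (intro card_Un_disjoint[symmetric]) auto
    also have "\<dots> \<le> card (A (n + c))" using finAc by (intro card_mono) auto
    finally show False using H12idx[of p] H12idx[of q] that cardAnc kl by simp
  qed
  have H11c: "card (A c \<inter> E j) \<ge> k div 2" if hj: "E j \<in> H11 k n G A B" "c \<in> tr1 n A B (E j)" for j
  proof -
    obtain a b where "tr1 n A B (E j) = {a, b}" "card (A a \<inter> E j) \<ge> k div 2" "card (A b \<inter> E j) \<ge> k div 2"
      using H11_facts[OF hj(1) G] by blast
    thus ?thesis using hj(2) by auto
  qed
  have mid12: False if "2 \<le> j" "j + 2 \<le> s + 1" "E j \<in> H12 l k n A B" for j
  proof -
    have d1: "E 0 \<inter> E j = {}" "E j \<inter> E (s+1) = {}" "E 0 \<inter> E (s+1) = {}" using far that by auto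
    have "card (A c \<inter> E 0) + card (A c \<inter> E j) + card (A c \<inter> E (s+1))
        = card ((A c \<inter> E 0) \<union> (A c \<inter> E j) \<union> (A c \<inter> E (s+1)))"
      using d1 finAc by (simp add: card_Un_disjoint Int_Un_distrib2 disjoint_iff)
    also have "\<dots> \<le> card (A c)" using finAc by (intro card_mono) auto
    finally show False using H12idx[of j] that H11c[OF E0 c_tr] H11c[OF Es1 c_tr2] cardAc by simp
  qed
  have left_ind: "1 \<le> j \<longrightarrow> j \<le> s \<longrightarrow> minS n A B (E j) > n \<longrightarrow> (\<exists>p. 1 \<le> p \<and> p < j \<and> E p \<in> H12 l k n A B)" for j
  proof (induction j)
    case 0 then show ?case by simp
  next
    case (Suc j)
    show ?case
    proof (intro impI)
      assume a: "1 \<le> Suc j" "Suc j \<le> s" "minS n A B (E (Suc j)) > n"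
      have j0: "j \<noteq> 0"
      proof
        assume "j = 0"
        hence "minS n A B (E (Suc j)) = c" using c_def by simp
        thus False using a cn by auto
      qed
      show "\<exists>p. 1 \<le> p \<and> p < Suc j \<and> E p \<in> H12 l k n A B"
      proof (cases "E j \<in> H12 l k n A B")
        case True
        have "1 \<le> j \<and> j < Suc j \<and> E j \<in> H12 l k n A B" using True j0 by simp
        thus ?thesis by blast
      next
        case False
        hence f2: "E j \<in> H2 l k n A B" using mid[of j] j0 a by auto
        have "E (Suc j) \<notin> H12 l k n A B" using H12idx[of "Suc j"] a cn by auto
        hence g2: "E (Suc j) \<in> H2 l k n A B" using mid[of "Suc j"] a by auto
        have "minS n A B (E j) = minS n A B (E (Suc j))"
          using H2_H2_eq[OF f2 g2 Int_lower1 Int_lower2 _ l2 lk] cons a by auto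
        thus ?thesis using Suc j0 a by auto
      qed
    qed
  qed
  have right_ind: "j + d = s \<longrightarrow> 1 \<le> j \<longrightarrow> minS n A B (E j) > n \<longrightarrow> (\<exists>q. j < q \<and> q \<le> s \<and> E q \<in> H12 l k n A B)" for d j
  proof (induction d arbitrary: j)
    case 0 then show ?case using \<open>minS n A B (E s) = c\<close> cn by auto
  next
    case (Suc d)
    show ?case
    proof (intro impI)
      assume a: "j + Suc d = s" "1 \<le> j" "minS n A B (E j) > n"
      show "\<exists>q. j < q \<and> q \<le> s \<and> E q \<in> H12 l k n A B"
      proof (cases "E (Suc j) \<in> H12 l k n A B")
        case True thus ?thesis using a by auto
      next
        case False
        hence g2: "E (Suc j) \<in> H2 l k n A B" using mid[of "Suc j"] a by auto
        have "E j \<notin> H12 l k n A B" using H12idx[of j] a cn by auto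
        hence f2: "E j \<in> H2 l k n A B" using mid[of j] a by auto
        have "minS n A B (E j) = minS n A B (E (Suc j))"
          using H2_H2_eq[OF f2 g2 Int_lower1 Int_lower2 _ l2 lk] cons a by auto
        hence "\<exists>q. Suc j < q \<and> q \<le> s \<and> E q \<in> H12 l k n A B" using Suc.IH[of "Suc j"] a by auto
        thus ?thesis by (meson Suc_lessD less_trans_Suc)
      qed
    qed
  qed
  have minc: "minS n A B (E j) = c" if hj: "1 \<le> j" "j \<le> s" for j
  proof (rule ccontr)
    assume "minS n A B (E j) \<noteq> c"
    hence big: "minS n A B (E j) > n" using cases_m[OF hj] cn by auto
    obtain p where p: "1 \<le> p" "p < j" "E p \<in> H12 l k n A B" using left_ind[of j] hj big by auto
    obtain q where q: "j < q" "q \<le> s" "E q \<in> H12 l k n A B" using right_ind[of j "s - j"] hj big by auto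
    show False using two12[of p q] p q by auto
  qed
  have partA: "\<forall>j\<le>s+1. E j \<in> H12 l k n A B \<longrightarrow> E j \<in> {E 1, E s}"
  proof (intro allI impI)
    fix j assume j: "j \<le> s + 1" "E j \<in> H12 l k n A B"
    have "j \<noteq> 0" using H11_H12[OF E0 G, of l] j by (metis)
    moreover have "j \<noteq> s + 1" using H11_H12[OF Es1 G, of l] j by (metis)
    moreover have "\<not> (2 \<le> j \<and> j + 2 \<le> s + 1)" using mid12 j by auto
    ultimately have "j = 1 \<or> j = s" using j by auto
    thus "E j \<in> {E 1, E s}" by auto
  qed
  have partB: "E 1 \<in> H12 l k n A B \<and> E s \<in> H12 l k n A B \<and> E 1 \<noteq> E s \<longrightarrow> s = 2"
  proof
    assume a: "E 1 \<in> H12 l k n A B \<and> E s \<in> H12 l k n A B \<and> E 1 \<noteq> E s"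
    hence "s \<noteq> 1" by auto
    moreover have "\<not> s \<ge> 3" using two12[of 1 s] a by auto
    ultimately show "s = 2" using s1 by auto
  qed
  have partC: "\<forall>i\<in>{1..s}. minS n A B (E i) \<in> tr1 n A B (E 0) \<inter> tr1 n A B (E (s + 1))"
    using minc c_tr c_tr2 by auto
  show ?thesis using partA partB partC unfolding E_def by blast
qed

end
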